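(* Let $\pi\in S_n$ be a 321-avoiding permutation and let $i_1<i_2<\dots<i_r$ be its excedance locations (the indices $i$ with $\pi(i)>i$). Then the number of fixed points of $\pi$ is: (1) $n$, if $\pi$ is the identity; (2) $i_1-1+\sum_{j=2}^{r}\max\{i_j-\pi(i_{j-1})-1,0\}+n-\pi(i_r)$, if $\pi$ is not the identity.
   Context: A permutation $\pi$ of $[n]$ is 321-avoiding if there are no $i<j<k$ with $\pi(k)<\pi(j)<\pi(i)$. *)

theory Defs
  imports "HOL-Combinatorics.Permutations"
begin

text \<open>Permutations of [n] = {1..n} are functions p with p permutes {1..n}.\<close>

definition avoids321 :: "nat \<Rightarrow> (nat \<Rightarrow> nat) \<Rightarrow> bool" where
  "avoids321 n p \<longleftrightarrow>
     \<not> (\<exists>i j k. 1 \<le> i \<and> i < j \<and> j < k \<and> k \<le> n \<and> p k < p j \<and> p j < p i)"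

definition excedances :: "nat \<Rightarrow> (nat \<Rightarrow> nat) \<Rightarrow> nat set" where
  "excedances n p = {i \<in> {1..n}. p i > i}"

definition fixed_points :: "nat \<Rightarrow> (nat \<Rightarrow> nat) \<Rightarrow> nat set" where
  "fixed_points n p = {i \<in> {1..n}. p i = i}"

end

theory Submission
  imports Defs
begin

fun gaps :: "(nat \<Rightarrow> nat) \<Rightarrow> nat list \<Rightarrow> nat" where
  "gaps p (e # e' # rest) = (e' - p e - 1) + gaps p (e' # rest)"
| "gaps p _ = 0"

lemma gaps_sum: "gaps p es = (\<Sum>j = 1..<length es. es ! j - p (es ! (j - 1)) - 1)"
proof (induction p es rule: gaps.induct)
  case (1 p e e' rest)
  have "(\<Sum>j = 1..<length (e # e' # rest). (e # e' # rest) ! j - p ((e # e' # rest) ! (j - 1)) - 1)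
      = (e' - p e - 1) + (\<Sum>j = Suc 1..<length (e # e' # rest). (e # e' # rest) ! j - p ((e # e' # rest) ! (j - 1)) - 1)"
    by (subst sum.atLeast_Suc_lessThan) auto
  also have "(\<Sum>j = Suc 1..<length (e # e' # rest). (e # e' # rest) ! j - p ((e # e' # rest) ! (j - 1)) - 1)
     = (\<Sum>j = 1 + 1..<length (e' # rest) + 1. (e # e' # rest) ! j - p ((e # e' # rest) ! (j - 1)) - 1)"
    by simp
  also have "\<dots> = (\<Sum>j = 1..<length (e' # rest). (e # e' # rest) ! (j+1) - p ((e # e' # rest) ! (j + 1 - 1)) - 1)"
    by (rule sum.shift_bounds_nat_ivl)
  also have "\<dots> = (\<Sum>j = 1..<length (e' # rest). (e' # rest) ! j - p ((e' # rest) ! (j - 1)) - 1)"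
    by (rule sum.cong) (auto simp: nth_Cons split: nat.splits)
  finally show ?case using 1 by simp
qed auto

lemma count:
  assumes "sorted_wrt (<) es" "sorted (map p es)" "\<forall>e\<in>set es. e \<le> p e \<and> p e \<le> n"
    "es \<noteq> []" "lo \<le> p (hd es) + 1"
  shows "card ({lo..n} - (\<Union>e\<in>set es. {e..p e})) = (hd es - lo) + gaps p es + (n - p (last es))"
  using assms
proof (induction es arbitrary: lo)
  case Nil thus ?case by simp
next
  case (Cons e es')
  show ?case
  proof (cases es')
    case Nil
    have eq: "{lo..n} - (\<Union>x\<in>set (e # es'). {x..p x}) = {lo..<e} \<union> {Suc (p e)..n}"
      using Cons.prems Nil by auto
    have "card ({lo..<e} \<union> {Suc (p e)..n}) = card {lo..<e} + card {Suc (p e)..n}"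
      using Cons.prems by (intro card_Un_disjoint) auto
    thus ?thesis using eq Nil by simp
  next
    case (Cons e' rest)
    let ?U = "\<Union>x\<in>set es'. {x..p x}"
    have lt: "\<forall>x\<in>set es'. e < x" using Cons.prems(1) by simp
    have le: "p e \<le> p e'" using Cons.prems(2) Cons by simp
    have eq: "{lo..n} - (\<Union>x\<in>set (e # es'). {x..p x}) = {lo..<e} \<union> ({Suc (p e)..n} - ?U)"
      using Cons.prems lt by fastforce
    have "card ({lo..<e} \<union> ({Suc (p e)..n} - ?U)) = card {lo..<e} + card ({Suc (p e)..n} - ?U)"
      using Cons.prems by (intro card_Un_disjoint) auto
    moreover have "card ({Suc (p e)..n} - ?U) = (hd es' - Suc (p e)) + gaps p es' + (n - p (last es'))"
      using Cons.IH[of "Suc (p e)"] Cons.prems le Cons by simp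
    ultimately show ?thesis using eq Cons by simp
  qed
qed

lemma pig:
  fixes p :: "nat \<Rightarrow> nat"
  assumes p: "p permutes {1..n}" and y: "1 \<le> y" "y \<le> m" and py: "p y > m"
  shows "\<exists>x. m < x \<and> x \<le> n \<and> 1 \<le> p x \<and> p x \<le> m"
proof (rule ccontr)
  assume H: "\<not> ?thesis"
  have yn: "y \<in> {1..n}"
  proof (rule ccontr)
    assume "y \<notin> {1..n}"
    hence "p y = y" using permutes_not_in[OF p] by auto
    thus False using y py by linarith
  qed
  have pyn: "p y \<le> n" using permutes_in_image[OF p] yn by auto
  have sub: "{1..m} \<subseteq> p ` {1..m}"
  proof
    fix v assume v: "v \<in> {1..m}"
    hence "v \<in> {1..n}" using py pyn by auto
    hence "v \<in> p ` {1..n}" using permutes_image[OF p] by simp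
    then obtain x where x: "x \<in> {1..n}" "v = p x" by auto
    have "x \<le> m" using H x v by force
    thus "v \<in> p ` {1..m}" using x by auto
  qed
  have "insert (p y) {1..m} \<subseteq> p ` {1..m}" using sub y by auto
  hence "card (insert (p y) {1..m}) \<le> card (p ` {1..m})" by (intro card_mono) auto
  also have "\<dots> \<le> card {1..m}" by (rule card_image_le) simp
  finally show False using py by simp
qed

lemma fix_eq:
  assumes p: "p permutes {1..n}" and a: "avoids321 n p"
  shows "fixed_points n p = {1..n} - (\<Union>e\<in>excedances n p. {e..p e})"
proof
  show "fixed_points n p \<subseteq> {1..n} - (\<Union>e\<in>excedances n p. {e..p e})"
  proof
    fix k assume k: "k \<in> fixed_points n p"
    hence k1: "k \<in> {1..n}" "p k = k" by (auto simp: fixed_points_def)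
    show "k \<in> {1..n} - (\<Union>e\<in>excedances n p. {e..p e})"
    proof (rule ccontr)
      assume "\<not> ?thesis"
      then obtain e where e: "e \<in> excedances n p" "e \<le> k" "k \<le> p e" using k1 by auto
      have e1: "e \<in> {1..n}" "p e > e" using e by (auto simp: excedances_def)
      have "e \<noteq> k" using e1 k1 by auto
      have "p e \<noteq> k" using permutes_inj[OF p] k1 \<open>e \<noteq> k\<close> by (metis injD)
      hence pek: "p e > k" using e by simp
      obtain x where x: "k < x" "x \<le> n" "1 \<le> p x" "p x \<le> k"
        using pig[OF p _ _ pek] e1 e by auto
      have "p x \<noteq> k" using permutes_inj[OF p] k1 x by (metis injD less_irrefl)
      hence "p x < p k" using x k1 by simp
      moreover have "e < k" using \<open>e \<noteq> k\<close> e by simp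
      moreover have "1 \<le> e" "p k < p e" using e1 pek k1 by auto
      ultimately show False using a x unfolding avoids321_def by blast
    qed
  qed
next
  show "{1..n} - (\<Union>e\<in>excedances n p. {e..p e}) \<subseteq> fixed_points n p"
  proof
    fix k assume k: "k \<in> {1..n} - (\<Union>e\<in>excedances n p. {e..p e})"
    have kn: "k \<in> {1..n}" using k by auto
    have "\<not> p k > k"
    proof
      assume "p k > k"
      hence "k \<in> excedances n p" using kn by (auto simp: excedances_def)
      thus False using k \<open>p k > k\<close> by auto
    qed
    moreover have "\<not> p k < k"
    proof
      assume lt: "p k < k"
      show False
      proof (cases "\<exists>e\<in>{1..<k}. p e \<ge> k")
        case True
        then obtain e where e: "e \<in> {1..<k}" "p e \<ge> k" by auto
        hence "e \<in> excedances n p" using kn by (auto simp: excedances_def)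
        thus False using e k by auto
      next
        case False
        have "p ` {1..<k} \<subseteq> {1..<k}"
        proof
          fix v assume "v \<in> p ` {1..<k}"
          then obtain e where e: "e \<in> {1..<k}" "v = p e" by auto
          have "e \<in> {1..n}" using e kn by auto
          hence "p e \<in> {1..n}" using permutes_in_image[OF p] by auto
          moreover have "\<not> k \<le> p e" using False e(1) by blast
          ultimately show "v \<in> {1..<k}" using e by auto
        qed
        moreover have "card (p ` {1..<k}) = card {1..<k}"
          using permutes_inj[OF p] by (simp add: card_image inj_on_subset)
        ultimately have eq: "p ` {1..<k} = {1..<k}" by (simp add: card_subset_eq)
        have "p k \<in> {1..n}" using permutes_in_image[OF p] kn by auto
        hence "p k \<in> p ` {1..<k}" using eq lt by auto
        then obtain e where "e \<in> {1..<k}" "p e = p k" by auto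
        thus False using permutes_inj[OF p] by (metis injD atLeastLessThan_iff less_irrefl)
      qed
    qed
    ultimately show "k \<in> fixed_points n p" using kn by (auto simp: fixed_points_def)
  qed
qed

lemma exc_mono:
  assumes p: "p permutes {1..n}" and a: "avoids321 n p"
    and e: "e \<in> excedances n p" "e' \<in> excedances n p" "e < e'"
  shows "p e \<le> p e'"
proof (rule ccontr)
  assume "\<not> ?thesis"
  hence lt: "p e' < p e" by simp
  have e1: "e \<in> {1..n}" "p e > e" "e' \<in> {1..n}" "p e' > e'" using e by (auto simp: excedances_def)
  obtain x where x: "e' < x" "x \<le> n" "1 \<le> p x" "p x \<le> e'"
    using pig[OF p, of e e'] e1 lt e by auto
  have "p x < p e'" "1 \<le> e" using x e1 by auto
  thus False using a x e1 lt e(3) unfolding avoids321_def by blast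
qed

lemma exc_nonempty:
  assumes p: "p permutes {1..n}" and ne: "p \<noteq> id"
  shows "excedances n p \<noteq> {}"
proof
  assume E: "excedances n p = {}"
  have le: "\<forall>x\<in>{1..n}. p x \<le> x" using E by (force simp: excedances_def)
  have "\<forall>x. p x = x"
  proof
    fix x show "p x = x"
    proof (induction x rule: less_induct)
      case (less x)
      show ?case
      proof (cases "x \<in> {1..n}")
        case False thus ?thesis using permutes_not_in[OF p] by auto
      next
        case True
        show ?thesis
        proof (rule ccontr)
          assume "p x \<noteq> x"
          moreover have "p x \<le> x" using le True by blast
          ultimately have "p x < x" by simp
          hence "p (p x) = p x" using less by auto
          hence "p x = x" using permutes_inj[OF p] by (metis injD)
          thus False using \<open>p x \<noteq> x\<close> by simp
        qed
      qed
    qed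
  qed
  thus False using ne by auto
qed

theorem mainTheorem12:
  fixes n :: nat and p :: "nat \<Rightarrow> nat"
  assumes "p permutes {1..n}" and "avoids321 n p"
  defines "ex \<equiv> sorted_list_of_set (excedances n p)"
  defines "r \<equiv> length ex"
  shows "(p = id \<longrightarrow> card (fixed_points n p) = n)
       \<and> (p \<noteq> id \<longrightarrow>
            int (card (fixed_points n p)) =
              int (ex ! 0) - 1
              + (\<Sum>j = 1..<r. max (int (ex ! j) - int (p (ex ! (j - 1))) - 1) 0)
              + int n - int (p (ex ! (r - 1))))"
proof (intro conjI impI)
  assume "p = id"
  hence "fixed_points n p = {1..n}" by (auto simp: fixed_points_def)
  thus "card (fixed_points n p) = n" by simp
next
  assume ne: "p \<noteq> id"
  note p = assms(1)
  let ?E = "excedances n p"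
  have fin: "finite ?E" unfolding excedances_def by simp
  have Ene: "?E \<noteq> {}" using exc_nonempty[OF p ne] .
  have setex: "set ex = ?E" unfolding ex_def using fin by simp
  have sw: "sorted_wrt (<) ex" unfolding ex_def by simp
  have exne: "ex \<noteq> []" using setex Ene by auto
  have r0: "r > 0" using exne r_def by simp
  have inE: "\<And>i. i < r \<Longrightarrow> ex ! i \<in> ?E" using setex r_def nth_mem by blast
  have sm: "sorted (map p ex)"
  proof (subst sorted_iff_nth_mono, intro allI impI)
    fix i j assume ij: "i \<le> j" "j < length (map p ex)"
    show "map p ex ! i \<le> map p ex ! j"
    proof (cases "i = j")
      case True thus ?thesis by simp
    next
      case False
      hence "ex ! i < ex ! j" using sw ij by (simp add: sorted_wrt_nth_less)
      moreover have "ex ! i \<in> ?E" "ex ! j \<in> ?E" using inE ij r_def by auto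
      ultimately have "p (ex ! i) \<le> p (ex ! j)" using exc_mono[OF p assms(2)] by blast
      thus ?thesis using ij by simp
    qed
  qed
  have bnd: "\<forall>e\<in>set ex. e \<le> p e \<and> p e \<le> n"
  proof
    fix e assume "e \<in> set ex"
    hence e: "e \<in> ?E" using setex by simp
    hence "e \<in> {1..n}" "p e > e" by (auto simp: excedances_def)
    moreover have "p e \<in> {1..n}" using permutes_in_image[OF p] calculation(1) by auto
    ultimately show "e \<le> p e \<and> p e \<le> n" by auto
  qed
  have c: "card ({1..n} - (\<Union>e\<in>set ex. {e..p e})) = (hd ex - 1) + gaps p ex + (n - p (last ex))"
    by (rule count[OF sw sm bnd exne]) simp
  have fp: "fixed_points n p = {1..n} - (\<Union>e\<in>set ex. {e..p e})"
    using fix_eq[OF p assms(2)] setex by simp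
  have h: "hd ex = ex ! 0" using exne by (simp add: hd_conv_nth)
  have l: "last ex = ex ! (r - 1)" using exne r_def by (simp add: last_conv_nth)
  have h1: "ex ! 0 \<ge> 1" using inE[OF r0] by (auto simp: excedances_def)
  have l1: "p (ex ! (r - 1)) \<le> n" using bnd l exne last_in_set by metis
  have g: "int (gaps p ex) = (\<Sum>j = 1..<r. max (int (ex ! j) - int (p (ex ! (j - 1))) - 1) 0)"
    unfolding gaps_sum r_def of_nat_sum by (rule sum.cong) auto
  show "int (card (fixed_points n p)) =
              int (ex ! 0) - 1
              + (\<Sum>j = 1..<r. max (int (ex ! j) - int (p (ex ! (j - 1))) - 1) 0)
              + int n - int (p (ex ! (r - 1)))"
    using c fp h l h1 l1 g by simp
qed

end
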